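(* Let $a,b,c,\gamma\in\mathbb{R}$ with $b\gamma\neq 0$, and let $\Omega\subset\mathbb{R}$ be a compact interval containing $0$ in its interior. Then the control system on $\mathbb{R}^2$ $$\dot s=\omega b,\qquad \dot t=(\gamma+a\omega)s+c\omega,\qquad \omega\in\Omega,$$ is controllable, i.e. for every $\mathbf v\in\mathbb{R}^2$ the positive orbit $\mathcal O^+(\mathbf v)=\{\varphi(\tau,\mathbf v,\omega):\tau\geq 0,\ \omega\in\mathcal U\}$ equals $\mathbb{R}^2$.
   Context: $\mathcal U$ denotes the set of piecewise constant functions $\omega:\mathbb{R}\to\Omega$ (controls), and $\varphi(\tau,\mathbf v,\omega)$ denotes the solution of the system at time $\tau$ with initial state $\mathbf v$ and control $\omega$. *)

theory Defs
  imports "HOL-Analysis.Analysis"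
begin

text \<open>Piecewise constant function on the real line: on every compact interval [a,b]
  there are finitely many break points outside of which the function is locally constant
  (values at the break points themselves are arbitrary).\<close>
definition piecewise_constant :: "(real \<Rightarrow> 'a) \<Rightarrow> bool" where
  "piecewise_constant w \<longleftrightarrow>
     (\<forall>a b. \<exists>S. finite S \<and>
        (\<forall>x y. a \<le> x \<longrightarrow> x \<le> y \<longrightarrow> y \<le> b \<longrightarrow> {x..y} \<inter> S = {} \<longrightarrow> w x = w y))"

definition controls :: "real set \<Rightarrow> (real \<Rightarrow> real) set" where
  "controls \<Omega> = {w. (\<forall>r. w r \<in> \<Omega>) \<and> piecewise_constant w}"

definition sys_rhs :: "real \<Rightarrow> real \<Rightarrow> real \<Rightarrow> real \<Rightarrow> real \<times> real \<Rightarrow> real \<Rightarrow> real \<times> real" where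
  "sys_rhs a b c \<gamma> x w = (w * b, (\<gamma> + a * w) * fst x + c * w)"

text \<open>x is a (Caratheodory, forward-time) solution with initial state v under control w.\<close>
definition is_solution ::
  "real \<Rightarrow> real \<Rightarrow> real \<Rightarrow> real \<Rightarrow> (real \<Rightarrow> real) \<Rightarrow> real \<times> real \<Rightarrow> (real \<Rightarrow> real \<times> real) \<Rightarrow> bool" where
  "is_solution a b c \<gamma> w v x \<longleftrightarrow>
     (\<forall>\<tau>\<ge>0. ((\<lambda>r. sys_rhs a b c \<gamma> (x r) (w r)) has_integral (x \<tau> - v)) {0..\<tau>})"

definition pos_orbit ::
  "real \<Rightarrow> real \<Rightarrow> real \<Rightarrow> real \<Rightarrow> real set \<Rightarrow> real \<times> real \<Rightarrow> (real \<times> real) set" where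
  "pos_orbit a b c \<gamma> \<Omega> v =
     {x \<tau> | \<tau> w x. \<tau> \<ge> 0 \<and> w \<in> controls \<Omega> \<and> is_solution a b c \<gamma> w v x}"

definition controllable :: "real \<Rightarrow> real \<Rightarrow> real \<Rightarrow> real \<Rightarrow> real set \<Rightarrow> bool" where
  "controllable a b c \<gamma> \<Omega> \<longleftrightarrow> (\<forall>v. pos_orbit a b c \<gamma> \<Omega> v = UNIV)"

end

theory Submission
  imports Defs
begin

lemma sol_zero:
  assumes "is_solution a b c \<gamma> w v x" shows "x 0 = v"
proof -
  from assms have "((\<lambda>r. sys_rhs a b c \<gamma> (x r) (w r)) has_integral (x 0 - v)) {0..0}"
    unfolding is_solution_def by auto
  moreover have "((\<lambda>r. sys_rhs a b c \<gamma> (x r) (w r)) has_integral 0) {0..0::real}"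
    by (rule has_integral_null_real) simp
  ultimately have "x 0 - v = 0" by (rule has_integral_unique)
  then show ?thesis by simp
qed

lemma pc_concat:
  assumes "piecewise_constant w1" "piecewise_constant w2"
  shows "piecewise_constant (\<lambda>r. if r \<le> t1 then w1 r else w2 (r - t1))"
  unfolding piecewise_constant_def
proof (intro allI)
  fix l u :: real
  obtain S1 where S1f: "finite S1" and S1a:
    "\<forall>x y. l \<le> x \<longrightarrow> x \<le> y \<longrightarrow> y \<le> u \<longrightarrow> {x..y} \<inter> S1 = {} \<longrightarrow> w1 x = w1 y"
    using assms(1)[unfolded piecewise_constant_def, rule_format, of l u] by (elim exE conjE)
  obtain S2 where S2f: "finite S2" and S2a:
    "\<forall>x y. l - t1 \<le> x \<longrightarrow> x \<le> y \<longrightarrow> y \<le> u - t1 \<longrightarrow> {x..y} \<inter> S2 = {} \<longrightarrow> w2 x = w2 y"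
    using assms(2)[unfolded piecewise_constant_def, rule_format, of "l - t1" "u - t1"] by (elim exE conjE)
  note S1 = S1f S1a[rule_format]
  note S2 = S2f S2a[rule_format]
  let ?S = "S1 \<union> ((\<lambda>z. z + t1) ` S2) \<union> {t1}"
  show "\<exists>S. finite S \<and> (\<forall>x y. l \<le> x \<longrightarrow> x \<le> y \<longrightarrow> y \<le> u \<longrightarrow> {x..y} \<inter> S = {} \<longrightarrow>
     (if x \<le> t1 then w1 x else w2 (x - t1)) = (if y \<le> t1 then w1 y else w2 (y - t1)))"
  proof (intro exI[of _ ?S] conjI allI impI)
    show "finite ?S" using S1(1) S2(1) by simp
  next
    fix x y assume h: "l \<le> x" "x \<le> y" "y \<le> u" "{x..y} \<inter> ?S = {}"
    have nt: "t1 \<notin> {x..y}" using h(4) by blast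
    show "(if x \<le> t1 then w1 x else w2 (x - t1)) = (if y \<le> t1 then w1 y else w2 (y - t1))"
    proof (cases "y < t1")
      case True
      have "{x..y} \<inter> S1 = {}" using h(4) by blast
      then have "w1 x = w1 y" by (rule S1(2)[OF h(1) h(2) h(3)])
      moreover have "x \<le> t1" "y \<le> t1" using True h(2) by linarith+
      ultimately show ?thesis by simp
    next
      case False
      then have xt: "x > t1" using nt h(2) by auto
      have "{x - t1..y - t1} \<inter> S2 = {}"
      proof (rule ccontr)
        assume "{x - t1..y - t1} \<inter> S2 \<noteq> {}"
        then obtain z where z: "z \<in> S2" "x - t1 \<le> z" "z \<le> y - t1" by auto
        have "z + t1 \<in> {x..y}" using z(2,3) by simp
        moreover have "z + t1 \<in> ?S" using z(1) by blast
        ultimately show False using h(4) by blast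
      qed
      moreover have "l - t1 \<le> x - t1" "x - t1 \<le> y - t1" "y - t1 \<le> u - t1" using h by linarith+
      ultimately have "w2 (x - t1) = w2 (y - t1)" using S2(2) by blast
      moreover have "\<not> x \<le> t1" "\<not> y \<le> t1" using xt h(2) by linarith+
      ultimately show ?thesis by simp
    qed
  qed
qed

lemma orbit_iff:
  "q \<in> pos_orbit a b c \<gamma> \<Omega> v \<longleftrightarrow>
    (\<exists>\<tau> w x. q = x \<tau> \<and> \<tau> \<ge> 0 \<and> w \<in> controls \<Omega> \<and> is_solution a b c \<gamma> w v x)"
  unfolding pos_orbit_def by (simp only: mem_Collect_eq)

lemma orbit_trans:
  assumes "p \<in> pos_orbit a b c \<gamma> \<Omega> v" "q \<in> pos_orbit a b c \<gamma> \<Omega> p"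
  shows "q \<in> pos_orbit a b c \<gamma> \<Omega> v"
proof -
  obtain t1 w1 x1 where A: "p = x1 t1" "t1 \<ge> 0" "w1 \<in> controls \<Omega>"
    "is_solution a b c \<gamma> w1 v x1" using assms(1)[unfolded orbit_iff] by (elim exE conjE)
  obtain t2 w2 x2 where B: "q = x2 t2" "t2 \<ge> 0" "w2 \<in> controls \<Omega>"
    "is_solution a b c \<gamma> w2 p x2" using assms(2)[unfolded orbit_iff] by (elim exE conjE)
  have x20: "x2 0 = p" using sol_zero[OF B(4)] .
  define w where "w = (\<lambda>r. if r \<le> t1 then w1 r else w2 (r - t1))"
  define x where "x = (\<lambda>r. if r \<le> t1 then x1 r else x2 (r - t1))"
  have w1c: "\<forall>r. w1 r \<in> \<Omega>" "piecewise_constant w1" using A(3) unfolding controls_def by simp_all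
  have w2c: "\<forall>r. w2 r \<in> \<Omega>" "piecewise_constant w2" using B(3) unfolding controls_def by simp_all
  have "\<forall>r. w r \<in> \<Omega>" using w1c(1) w2c(1) unfolding w_def by simp
  moreover have "piecewise_constant w" unfolding w_def by (rule pc_concat[OF w1c(2) w2c(2)])
  ultimately have wc: "w \<in> controls \<Omega>" unfolding controls_def by simp
  let ?F = "\<lambda>r. sys_rhs a b c \<gamma> (x r) (w r)"
  have sol: "is_solution a b c \<gamma> w v x"
    unfolding is_solution_def
  proof (intro allI impI)
    fix \<tau> :: real assume "\<tau> \<ge> 0"
    show "(?F has_integral (x \<tau> - v)) {0..\<tau>}"
    proof (cases "\<tau> \<le> t1")
      case True
      have I: "((\<lambda>r. sys_rhs a b c \<gamma> (x1 r) (w1 r)) has_integral (x1 \<tau> - v)) {0..\<tau>}"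
        using A(4)[unfolded is_solution_def, rule_format, OF \<open>\<tau> \<ge> 0\<close>] .
      have "(?F has_integral (x1 \<tau> - v)) {0..\<tau>}"
        by (rule has_integral_spike_finite[OF finite.emptyI _ I]) (use True in \<open>simp add: x_def w_def\<close>)
      then show ?thesis using True by (simp add: x_def)
    next
      case False
      have I1: "((\<lambda>r. sys_rhs a b c \<gamma> (x1 r) (w1 r)) has_integral (p - v)) {0..t1}"
        using A(4)[unfolded is_solution_def, rule_format, OF A(2)] A(1) by simp
      have I1': "(?F has_integral (p - v)) {0..t1}"
        by (rule has_integral_spike_finite[OF finite.emptyI _ I1]) (simp add: x_def w_def)
      have I2: "((\<lambda>r. sys_rhs a b c \<gamma> (x2 r) (w2 r)) has_integral (x2 (\<tau> - t1) - p)) {0..\<tau> - t1}"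
        using B(4)[unfolded is_solution_def, rule_format, of "\<tau> - t1"] False by simp
      have I2s: "(((\<lambda>r. sys_rhs a b c \<gamma> (x2 r) (w2 r)) \<circ> (+) (-t1)) has_integral (x2 (\<tau> - t1) - p)) {t1..\<tau>}"
        using I2 has_integral_shift_Icc_real[of "\<lambda>r. sys_rhs a b c \<gamma> (x2 r) (w2 r)" "-t1" _ t1 \<tau>]
        by simp
      have I2': "(?F has_integral (x2 (\<tau> - t1) - p)) {t1..\<tau>}"
        by (rule has_integral_spike_finite[where S="{t1}", OF _ _ I2s]) (simp_all add: x_def w_def)
      have "(?F has_integral ((p - v) + (x2 (\<tau> - t1) - p))) {0..\<tau>}"
        by (rule has_integral_combine[OF _ _ I1' I2']) (use A(2) False in simp_all)
      moreover have "(p - v) + (x2 (\<tau> - t1) - p) = x \<tau> - v" using False by (simp add: x_def)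
      ultimately show ?thesis by simp
    qed
  qed
  have "x (t1 + t2) = q"
    using B(1,2) x20 A(1,2) by (simp add: x_def)
  then show ?thesis unfolding orbit_iff using sol wc A(2) B(2)
    by (intro exI[of _ "t1 + t2"] exI[of _ w] exI[of _ x]) simp
qed


lemma const_move:
  assumes "e \<in> \<Omega>" "\<tau> \<ge> 0"
  shows "(s + e * b * \<tau>, t + (\<gamma>+a * e) * (s * \<tau> + e * b * \<tau>^2/2) + c * e * \<tau>) \<in> pos_orbit a b c \<gamma> \<Omega> (s,t)"
proof -
  define x where "x = (\<lambda>r::real. (s + e * b * r, t + (\<gamma>+a * e) * (s * r + e * b * r^2/2) + c * e * r))"
  have pc: "piecewise_constant (\<lambda>_::real. e)" unfolding piecewise_constant_def by auto
  have wc: "(\<lambda>_. e) \<in> controls \<Omega>" using pc assms(1) unfolding controls_def by auto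
  have sol: "is_solution a b c \<gamma> (\<lambda>_. e) (s,t) x"
    unfolding is_solution_def
  proof (intro allI impI)
    fix T :: real assume T: "T \<ge> 0"
    have "((\<lambda>r. sys_rhs a b c \<gamma> (x r) e) has_integral (x T - x 0)) {0..T}"
    proof (rule fundamental_theorem_of_calculus[OF T])
      fix r assume "r \<in> {0..T}"
      show "(x has_vector_derivative sys_rhs a b c \<gamma> (x r) e) (at r within {0..T})"
        unfolding x_def sys_rhs_def power2_eq_square
        by (auto intro!: derivative_eq_intros simp: algebra_simps)
    qed
    moreover have "x 0 = (s,t)" by (simp add: x_def)
    ultimately show "((\<lambda>r. sys_rhs a b c \<gamma> (x r) e) has_integral (x T - (s,t))) {0..T}" by simp
  qed
  show ?thesis unfolding orbit_iff using sol wc assms(2)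
    by (intro exI[of _ \<tau>] exI[of _ "\<lambda>_. e"] exI[of _ x]) (simp add: x_def)
qed

context
  fixes a b c \<gamma> :: real and \<Omega> :: "real set" and e1 e2 :: real
  assumes b: "b \<noteq> 0" and g: "\<gamma> \<noteq> 0" and e1: "e1 \<in> \<Omega>" "e1 > 0"
    and e2: "e2 \<in> \<Omega>" "e2 < 0" and z: "0 \<in> \<Omega>"
begin

lemma vmove: "\<exists>\<delta>. \<forall>t. (s', t+\<delta>) \<in> pos_orbit a b c \<gamma> \<Omega> (s,t)"
proof -
  obtain e where e: "e \<in> \<Omega>" "e \<noteq> 0" "e * b * (s'-s) \<ge> 0"
  proof (cases "b * (s'-s) \<ge> 0")
    case True then show ?thesis using e1 that[of e1] by (simp add: mult.assoc)
  next
    case False then show ?thesis using e2 that[of e2]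
      by (simp add: mult.assoc mult_nonpos_nonpos)
  qed
  define \<tau> where "\<tau> = (s'-s)/(e * b)"
  have eb: "e * b \<noteq> 0" using e b by simp
  have t_eq: "\<tau> = (e * b * (s' - s)) / ((e * b) * (e * b))" unfolding \<tau>_def using eb by simp
  have pos: "(e * b) * (e * b) > 0" using eb not_real_square_gt_zero by blast
  have nn: "(e * b * (s' - s)) / ((e * b) * (e * b)) \<ge> 0" by (rule divide_nonneg_pos[OF e(3) pos])
  have tau: "\<tau> \<ge> 0" using nn by (simp only: t_eq)
  have s': "s + e * b * \<tau> = s'" unfolding \<tau>_def using e b by simp
  show ?thesis
    using const_move[OF e(1) tau, of s] s' by (intro exI allI) (auto simp: add.assoc)
qed

lemma hmove: "T \<ge> 0 \<Longrightarrow> (s, t + \<gamma> * s * T) \<in> pos_orbit a b c \<gamma> \<Omega> (s,t)"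
  using const_move[OF z, where \<tau>=T and a=a and b=b and c=c and \<gamma>=\<gamma> and s=s and t=t] by (simp add: mult.assoc)

lemma horiz_nz:
  assumes "s \<noteq> 0"
  shows "(s,t') \<in> pos_orbit a b c \<gamma> \<Omega> (s,t)"
proof -
  obtain \<alpha> where A: "\<And>t. (-s, t+\<alpha>) \<in> pos_orbit a b c \<gamma> \<Omega> (s,t)" using vmove by blast
  obtain \<beta> where B: "\<And>t. (s, t+\<beta>) \<in> pos_orbit a b c \<gamma> \<Omega> (-s,t)" using vmove by blast
  define d where "d = t' - t - \<alpha> - \<beta>"
  define T1 where "T1 = max (d/(\<gamma> * s)) 0"
  define T2 where "T2 = max (-d/(\<gamma> * s)) 0"
  have gs: "\<gamma> * s \<noteq> 0" using g assms by simp
  have eq: "\<gamma> * s * T1 - \<gamma> * s * T2 = d"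
  proof -
    have "T1 - T2 = d / (\<gamma> * s)" unfolding T1_def T2_def by (simp add: max_def)
    then have "\<gamma> * s * (T1 - T2) = d" using gs by simp
    then show ?thesis by (simp add: algebra_simps)
  qed
  have P1: "(s, t + \<gamma> * s * T1) \<in> pos_orbit a b c \<gamma> \<Omega> (s,t)"
    by (rule hmove) (simp add: T1_def)
  have P2: "(-s, t + \<gamma> * s * T1 + \<alpha>) \<in> pos_orbit a b c \<gamma> \<Omega> (s, t + \<gamma> * s * T1)" by (rule A)
  have P3: "(-s, t + \<gamma> * s * T1 + \<alpha> + \<gamma> * (-s) * T2) \<in> pos_orbit a b c \<gamma> \<Omega> (-s, t + \<gamma> * s * T1 + \<alpha>)"
    by (rule hmove) (simp add: T2_def)
  have P4: "(s, t + \<gamma> * s * T1 + \<alpha> + \<gamma> * (-s) * T2 + \<beta>) \<in> pos_orbit a b c \<gamma> \<Omega> (-s, t + \<gamma> * s * T1 + \<alpha> + \<gamma> * (-s) * T2)"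
    by (rule B)
  have "t + \<gamma> * s * T1 + \<alpha> + \<gamma> * (-s) * T2 + \<beta> = t'" using eq unfolding d_def by simp
  then show ?thesis using orbit_trans[OF orbit_trans[OF orbit_trans[OF P1 P2] P3] P4] by simp
qed

lemma horiz: "(s,t') \<in> pos_orbit a b c \<gamma> \<Omega> (s,t)"
proof (cases "s = 0")
  case False then show ?thesis by (rule horiz_nz)
next
  case True
  obtain \<alpha> where A: "\<And>t. (1, t+\<alpha>) \<in> pos_orbit a b c \<gamma> \<Omega> (s,t)" using vmove by blast
  obtain \<beta> where B: "\<And>t. (s, t+\<beta>) \<in> pos_orbit a b c \<gamma> \<Omega> (1,t)" using vmove by blast
  have "(1, t' - \<beta>) \<in> pos_orbit a b c \<gamma> \<Omega> (1, t+\<alpha>)" by (rule horiz_nz) simp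
  from orbit_trans[OF orbit_trans[OF A this] B] show ?thesis by simp
qed

lemma reach_all: "p \<in> pos_orbit a b c \<gamma> \<Omega> v"
proof -
  obtain s0 t0 where v: "v = (s0,t0)" by fastforce
  obtain s1 t1 where p: "p = (s1,t1)" by fastforce
  obtain \<delta> where D: "\<And>t. (s1, t+\<delta>) \<in> pos_orbit a b c \<gamma> \<Omega> (s0,t)" using vmove by blast
  show ?thesis unfolding v p using orbit_trans[OF D horiz] .
qed

end

theorem proposition6:
  fixes a b c \<gamma> :: real and \<Omega> :: "real set"
  assumes "b * \<gamma> \<noteq> 0"
    and "compact \<Omega>" and "is_interval \<Omega>" and "0 \<in> interior \<Omega>"
  shows "controllable a b c \<gamma> \<Omega>"
proof -
  obtain r where r: "r > 0" "ball 0 r \<subseteq> \<Omega>" using assms(4) mem_interior by blast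
  have "r/2 \<in> \<Omega>" "-(r/2) \<in> \<Omega>" using r by (auto simp: subset_eq dist_real_def)
  moreover have "(0::real) \<in> \<Omega>" using assms(4) interior_subset by blast
  ultimately show ?thesis unfolding controllable_def
    using reach_all[of b \<gamma> "r/2" \<Omega> "-(r/2)"] assms(1) r(1) by auto
qed

end
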